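(* Let $V$ and $H$ be real Hilbert spaces with scalar products $(\cdot,\cdot)_V$, $(\cdot,\cdot)_H$ and norms $\|\cdot\|_V$, $\|\cdot\|_H$, and let $\gamma:V\to H$ be a continuous, linear and compact operator. Let $\lambda_i$, $i=1,2,\dots$, be the eigenvalues of the problem: find $\lambda\in\mathbb{R}$, $u\in V$, $u\ne0$, with $(u,v)_V=\lambda(\gamma u,\gamma v)_H$ for all $v\in V$. Let $u_*\in V$ and $\lambda_*\in\mathbb{R}$ be arbitrary and let $w\in V$ satisfy $$(w,v)_V=(u_*,v)_V-\lambda_*(\gamma u_*,\gamma v)_H\quad\forall v\in V.$$ If $\gamma u_*\neq0$, then $$\min_i\left|\frac{\lambda_i-\lambda_*}{\lambda_i}\right|\le\frac{\|\gamma w\|_H}{\|\gamma u_*\|_H}.$$ *)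

theory Defs
  imports "HOL-Analysis.Analysis"
begin

definition compact_operator :: "('a::real_normed_vector \<Rightarrow> 'b::real_normed_vector) \<Rightarrow> bool" where
  "compact_operator T \<longleftrightarrow> bounded_linear T \<and>
     (\<forall>B. bounded B \<longrightarrow> compact (closure (T ` B)))"

definition steklov_eigenvalue ::
  "('v::real_inner \<Rightarrow> 'h::real_inner) \<Rightarrow> real \<Rightarrow> bool" where
  "steklov_eigenvalue \<gamma> lam \<longleftrightarrow>
     (\<exists>u. u \<noteq> 0 \<and> (\<forall>v. inner u v = lam * inner (\<gamma> u) (\<gamma> v)))"

end

theory Submission
  imports Defs
begin

lemma EL:
  fixes g :: "'v::real_inner \<Rightarrow> 'h::real_inner"
  assumes lin: "bounded_linear g"
    and add: "\<forall>x\<in>S. \<forall>y\<in>S. x + y \<in> S" and sc: "\<forall>x\<in>S. \<forall>c. c *\<^sub>R x \<in> S"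
    and u: "u \<in> S"
    and bd: "\<forall>v\<in>S. (norm (g v))\<^sup>2 \<le> M * (norm v)\<^sup>2"
    and eq: "(norm (g u))\<^sup>2 = M * (norm u)\<^sup>2" and v: "v \<in> S"
  shows "inner (g u) (g v) = M * inner u v"
proof -
  interpret g: bounded_linear g by fact
  define a where "a = inner (g u) (g v) - M * inner u v"
  define b where "b = (norm (g v))\<^sup>2 - M * (norm v)\<^sup>2"
  have b: "b \<le> 0" using bd v by (simp add: b_def)
  have key: "2*t*a + t\<^sup>2*b \<le> 0" for t
  proof -
    have "u + t *\<^sub>R v \<in> S" using add sc u v by blast
    hence "(norm (g (u + t *\<^sub>R v)))\<^sup>2 \<le> M * (norm (u + t *\<^sub>R v))\<^sup>2" using bd by blast
    moreover have "g (u + t *\<^sub>R v) = g u + t *\<^sub>R g v"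
      by (simp add: g.add g.scaleR)
    ultimately have "inner (g u + t *\<^sub>R g v) (g u + t *\<^sub>R g v) \<le> M * inner (u + t *\<^sub>R v) (u + t *\<^sub>R v)"
      by (simp add: power2_norm_eq_inner)
    hence "inner (g u) (g u) + 2*t*inner (g u) (g v) + t\<^sup>2 * inner (g v) (g v)
        \<le> M * (inner u u + 2*t*inner u v + t\<^sup>2 * inner v v)"
      by (simp add: inner_add_left inner_add_right inner_commute power2_eq_square algebra_simps)
    thus ?thesis using eq unfolding a_def b_def power2_norm_eq_inner
      by (simp add: algebra_simps)
  qed
  show ?thesis
  proof (rule ccontr)
    assume "\<not> ?thesis"
    hence a0: "a \<noteq> 0" by (simp add: a_def)
    define t where "t = a / (1 - b)"
    have pb: "1 - b > 0" using b by simp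
    have "2*t*a + t\<^sup>2*b = a\<^sup>2 * (2 - b) / (1-b)\<^sup>2"
    proof -
      have nz: "1 - b \<noteq> 0" using pb by simp
      show ?thesis unfolding t_def using nz
        by (simp add: power2_eq_square divide_simps) (simp add: algebra_simps)
    qed
    moreover have "a\<^sup>2 * (2 - b) / (1-b)\<^sup>2 > 0" using a0 b pb by simp
    ultimately show False using key[of t] by simp
  qed
qed

lemma maximizer:
  fixes g :: "'v::{real_inner,complete_space} \<Rightarrow> 'h::real_inner"
  assumes bl: "bounded_linear g" and cpt: "\<forall>B. bounded B \<longrightarrow> compact (closure (g ` B))"
    and cl: "closed S" and add: "\<forall>x\<in>S. \<forall>y\<in>S. x + y \<in> S" and sc: "\<forall>x\<in>S. \<forall>c. c *\<^sub>R x \<in> S"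
    and nz: "\<exists>v\<in>S. g v \<noteq> 0"
  shows "\<exists>u\<in>S. norm u = 1 \<and> (\<forall>v\<in>S. (norm (g v))\<^sup>2 \<le> (norm (g u))\<^sup>2 * (norm v)\<^sup>2)"
proof -
  interpret g: bounded_linear g by fact
  define A where "A = {(norm (g u))\<^sup>2 | u. u \<in> S \<and> norm u = 1}"
  define M where "M = Sup A"
  obtain K where K: "\<And>x. norm (g x) \<le> norm x * K" using g.bounded by blast
  have bdd: "bdd_above A"
  proof (rule bdd_aboveI)
    fix z assume "z \<in> A"
    then obtain u where u: "z = (norm (g u))\<^sup>2" "norm u = 1" unfolding A_def by blast
    have "norm (g u) \<le> K" using K[of u] u by simp
    thus "z \<le> K\<^sup>2" using u by (simp add: power_mono)
  qed
  obtain v0 where v0: "v0 \<in> S" "g v0 \<noteq> 0" using nz by blast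
  have "v0 \<noteq> 0" using v0 by auto
  define u0 where "u0 = (1/norm v0) *\<^sub>R v0"
  have u0: "u0 \<in> S" "norm u0 = 1" using sc v0 \<open>v0 \<noteq> 0\<close> by (auto simp: u0_def)
  have "g u0 \<noteq> 0" using v0 \<open>v0 \<noteq> 0\<close> by (simp add: u0_def g.scaleR)
  have inA: "(norm (g u0))\<^sup>2 \<in> A" using u0 unfolding A_def by blast
  hence ne: "A \<noteq> {}" by blast
  have ub: "(norm (g u))\<^sup>2 \<le> M" if "u \<in> S" "norm u = 1" for u
    unfolding M_def by (rule cSup_upper[OF _ bdd]) (use that in \<open>auto simp: A_def\<close>)
  have Mpos: "M > 0"
  proof -
    have "(norm (g u0))\<^sup>2 > 0" using \<open>g u0 \<noteq> 0\<close> by simp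
    thus ?thesis using ub[OF u0] by linarith
  qed
  have bound: "\<forall>v\<in>S. (norm (g v))\<^sup>2 \<le> M * (norm v)\<^sup>2"
  proof
    fix v assume v: "v \<in> S"
    show "(norm (g v))\<^sup>2 \<le> M * (norm v)\<^sup>2"
    proof (cases "v = 0")
      case True thus ?thesis by simp
    next
      case False
      define u where "u = (1/norm v) *\<^sub>R v"
      have "u \<in> S" "norm u = 1" using sc v False by (auto simp: u_def)
      hence "(norm (g u))\<^sup>2 \<le> M" by (rule ub)
      moreover have "(norm (g u))\<^sup>2 = (norm (g v))\<^sup>2 / (norm v)\<^sup>2"
        by (simp add: u_def g.scaleR power_divide)
      ultimately show ?thesis using False by (simp add: divide_simps mult.commute)
    qed
  qed
  have "\<forall>n::nat. \<exists>u. u \<in> S \<and> norm u = 1 \<and> M - inverse (real (Suc n)) < (norm (g u))\<^sup>2"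
  proof
    fix n :: nat
    have "M - inverse (real (Suc n)) < Sup A" unfolding M_def[symmetric] by simp
    then obtain z where "z \<in> A" "M - inverse (real (Suc n)) < z"
      using less_cSup_iff[OF ne bdd] by blast
    thus "\<exists>u. u \<in> S \<and> norm u = 1 \<and> M - inverse (real (Suc n)) < (norm (g u))\<^sup>2"
      unfolding A_def by blast
  qed
  then obtain u where u: "\<And>n. u n \<in> S" "\<And>n. norm (u n) = 1"
     "\<And>n. M - inverse (real (Suc n)) < (norm (g (u n)))\<^sup>2" by metis
  have cc: "compact (closure (g ` cball 0 1))" using cpt by simp
  have "\<forall>n. g (u n) \<in> closure (g ` cball 0 1)"
    using u(2) by (metis closure_subset image_eqI mem_cball_0 order_refl subsetD)
  then obtain y r where r: "strict_mono r" "((\<lambda>n. g (u n)) \<circ> r) \<longlonglongrightarrow> y"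
    using cc unfolding compact_def by metis
  define x where "x = u \<circ> r"
  have gx: "(\<lambda>n. g (x n)) \<longlonglongrightarrow> y" using r(2) by (simp add: x_def comp_def)
  have xS: "x n \<in> S" "norm (x n) = 1" for n using u by (auto simp: x_def)
  have l1: "(\<lambda>n. (norm (g (x n)))\<^sup>2) \<longlonglongrightarrow> (norm y)\<^sup>2" by (intro tendsto_intros gx)
  have "(\<lambda>n. M - inverse (real (Suc n))) \<longlonglongrightarrow> M - 0"
    by (intro tendsto_intros LIMSEQ_inverse_real_of_nat)
  hence "((\<lambda>n. M - inverse (real (Suc n))) \<circ> r) \<longlonglongrightarrow> M"
    using LIMSEQ_subseq_LIMSEQ r(1) by fastforce
  hence l2: "(\<lambda>n. (norm (g (x n)))\<^sup>2) \<longlonglongrightarrow> M"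
  proof (rule tendsto_sandwich[rotated 2])
    show "\<forall>\<^sub>F n in sequentially. ((\<lambda>n. M - inverse (real (Suc n))) \<circ> r) n \<le> (norm (g (x n)))\<^sup>2"
      using u(3) by (auto simp: x_def less_imp_le)
    show "\<forall>\<^sub>F n in sequentially. (norm (g (x n)))\<^sup>2 \<le> M" using ub xS by auto
  qed auto
  have My: "(norm y)\<^sup>2 = M" using LIMSEQ_unique[OF l1 l2] .
  define c where "c = norm y"
  have cpos: "c > 0" using My Mpos c_def by (metis norm_zero power_zero_numeral zero_less_norm_iff)
  have Mc: "M = c\<^sup>2" using My c_def by simp
  define a where "a n = norm (g (x n) - y)" for n
  have a0: "a \<longlonglongrightarrow> 0"
    unfolding a_def using gx by (simp add: LIM_zero tendsto_norm_zero)
  have key: "M * (norm (x m - x n))\<^sup>2 \<le> 4 * c * (a m + a n)" for m n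
  proof -
    have "2 *\<^sub>R y = (g (x m) + g (x n)) - (g (x m) - y) - (g (x n) - y)" by (simp add: scaleR_2)
    hence "norm (2 *\<^sub>R y) \<le> norm (g (x m) + g (x n)) + a m + a n"
    proof -
      have "norm ((g (x m) + g (x n)) - (g (x m) - y) - (g (x n) - y))
          \<le> norm ((g (x m) + g (x n)) - (g (x m) - y)) + norm (g (x n) - y)" by (rule norm_triangle_ineq4)
      also have "norm ((g (x m) + g (x n)) - (g (x m) - y)) \<le> norm (g (x m) + g (x n)) + norm (g (x m) - y)"
        by (rule norm_triangle_ineq4)
      finally show ?thesis unfolding a_def using \<open>2 *\<^sub>R y = _\<close> by simp
    qed
    hence t1: "2*c - a m - a n \<le> norm (g (x m) + g (x n))" by (simp add: c_def)
    have t2: "4*c\<^sup>2 - 4*c*(a m + a n) \<le> (norm (g (x m) + g (x n)))\<^sup>2"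
    proof (cases "2*c - a m - a n \<ge> 0")
      case True
      hence "(2*c - a m - a n)\<^sup>2 \<le> (norm (g (x m) + g (x n)))\<^sup>2" using t1 by (simp add: power_mono)
      moreover have "4*c\<^sup>2 - 4*c*(a m + a n) \<le> (2*c - a m - a n)\<^sup>2"
      proof -
        have "(2*c - a m - a n)\<^sup>2 = 4*c\<^sup>2 - 4*c*(a m + a n) + (a m + a n)\<^sup>2"
          by (simp add: power2_eq_square algebra_simps)
        thus ?thesis using zero_le_power2[of "a m + a n"] by linarith
      qed
      ultimately show ?thesis by linarith
    next
      case False
      hence "4*c\<^sup>2 - 4*c*(a m + a n) < 0" using cpos
      proof -
        have "c*(2*c) < c*(a m + a n)" using False cpos by (intro mult_strict_left_mono) auto
        moreover have "4*c\<^sup>2 - 4*c*(a m + a n) = 2*(c*(2*c)) - 4*(c*(a m + a n))"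
          by (simp add: power2_eq_square algebra_simps)
        moreover have "c*(2*c) > 0" using cpos by simp
        ultimately show ?thesis by linarith
      qed
      thus ?thesis using zero_le_power2[of "norm (g (x m) + g (x n))"] by linarith
    qed
    have t3: "(norm (g (x m) + g (x n)))\<^sup>2 \<le> M * (norm (x m + x n))\<^sup>2"
      using bound add xS by (metis g.add)
    have ii: "inner (x k) (x k) = 1" for k using xS(2)[of k] by (metis power2_norm_eq_inner power_one)
    have t4: "(norm (x m - x n))\<^sup>2 = 4 - (norm (x m + x n))\<^sup>2"
      using ii unfolding power2_norm_eq_inner
      by (simp add: inner_add_left inner_add_right inner_diff_left inner_diff_right inner_commute)
    have e1: "M*(norm (x m - x n))\<^sup>2 = 4*M - M*(norm (x m + x n))\<^sup>2" unfolding t4 by (simp add: algebra_simps)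
    have e2: "4*c\<^sup>2 = 4*M" using Mc by simp
    show ?thesis using t2 t3 e1 e2 by linarith
  qed
  have "Cauchy x"
  proof (rule CauchyI)
    fix e :: real assume e: "e > 0"
    have "e\<^sup>2 * c / 8 > 0" using e cpos by simp
    then obtain N where N: "\<And>k. k \<ge> N \<Longrightarrow> a k < e\<^sup>2 * c / 8"
      using order_tendstoD(2)[OF a0] unfolding eventually_sequentially by blast
    show "\<exists>N. \<forall>m\<ge>N. \<forall>n\<ge>N. norm (x m - x n) < e"
    proof (intro exI allI impI)
      fix m n assume "m \<ge> N" "n \<ge> N"
      hence "4 * c * (a m + a n) < 4 * c * (e\<^sup>2 * c / 8 + e\<^sup>2 * c / 8)"
        using N cpos by (intro mult_strict_left_mono add_strict_mono) auto
      hence "c\<^sup>2 * (norm (x m - x n))\<^sup>2 < c\<^sup>2 * e\<^sup>2"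
        using key[of m n] Mc by (simp add: power2_eq_square algebra_simps)
      hence "(norm (x m - x n))\<^sup>2 < e\<^sup>2" using cpos by simp
      thus "norm (x m - x n) < e" using e by (simp add: power_less_imp_less_base)
    qed
  qed
  then obtain u' where xu: "x \<longlonglongrightarrow> u'" using Cauchy_convergent_iff convergent_def by blast
  have u'S: "u' \<in> S" using closed_sequentially[OF cl xS(1) xu] .
  have "(\<lambda>n. norm (x n)) \<longlonglongrightarrow> norm u'" by (intro tendsto_intros xu)
  hence nu: "norm u' = 1" using xS(2) by (simp add: LIMSEQ_const_iff)
  have "(\<lambda>n. g (x n)) \<longlonglongrightarrow> g u'" using g.tendsto[OF xu] .
  hence "g u' = y" using gx LIMSEQ_unique by blast
  hence "(norm (g u'))\<^sup>2 = M" using My by simp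
  thus ?thesis using u'S nu bound by auto
qed


lemma small:
  fixes g :: "'v::real_normed_vector \<Rightarrow> 'h::real_inner" and e :: "nat \<Rightarrow> 'v" and N :: nat
  assumes cpt: "\<forall>B. bounded B \<longrightarrow> compact (closure (g ` B))"
    and orth: "\<And>i j. i \<noteq> j \<Longrightarrow> inner (g (e i)) (g (e j)) = 0"
    and nb: "\<And>k. norm (e k) \<le> 1" and eps: "\<epsilon> > 0"
  shows "\<exists>k\<ge>N. (norm (g (e k)))\<^sup>2 < \<epsilon>"
proof (rule ccontr)
  assume "\<not> ?thesis"
  hence big: "\<And>k. k \<ge> N \<Longrightarrow> (norm (g (e k)))\<^sup>2 \<ge> \<epsilon>" by (auto simp: not_less)
  define f where "f n = g (e (N + n))" for n
  have cc: "compact (closure (g ` cball 0 1))" using cpt by simp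
  have "\<forall>n. f n \<in> closure (g ` cball 0 1)"
    using nb unfolding f_def by (metis closure_subset image_eqI mem_cball_0 subsetD)
  then obtain y r where r: "strict_mono r" "(f \<circ> r) \<longlonglongrightarrow> y"
    using cc unfolding compact_def by metis
  hence "Cauchy (f \<circ> r)" by (simp add: LIMSEQ_imp_Cauchy)
  moreover have "sqrt \<epsilon> > 0" using eps by simp
  ultimately obtain M where M: "\<forall>m\<ge>M. \<forall>n\<ge>M. dist ((f \<circ> r) m) ((f \<circ> r) n) < sqrt \<epsilon>"
    unfolding Cauchy_def by blast
  define i where "i = N + r M"
  define j where "j = N + r (Suc M)"
  have "r M < r (Suc M)" using r(1) by (simp add: strict_mono_def)
  hence ij: "i \<noteq> j" by (simp add: i_def j_def)
  have "norm (g (e i) - g (e j)) < sqrt \<epsilon>"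
    using M[rule_format, of M "Suc M"] by (simp add: f_def i_def j_def dist_norm)
  hence "(norm (g (e i) - g (e j)))\<^sup>2 < \<epsilon>"
    using eps by (metis norm_ge_zero power_strict_mono real_sqrt_pow2 less_imp_le zero_less_numeral)
  moreover have "(norm (g (e i) - g (e j)))\<^sup>2 = (norm (g (e i)))\<^sup>2 + (norm (g (e j)))\<^sup>2"
    using orth[OF ij] unfolding power2_norm_eq_inner
    by (simp add: inner_diff_left inner_diff_right inner_commute)
  moreover have "i \<ge> N" "j \<ge> N" by (auto simp: i_def j_def)
  ultimately show False using big[of i] big[of j] eps by linarith
qed


theorem theorem3p3:
  fixes \<gamma> :: "'v::{real_inner, complete_space} \<Rightarrow> 'h::{real_inner, complete_space}"
    and u_star w :: 'v and lam_star :: real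
  assumes "compact_operator \<gamma>"
    and "\<forall>v. inner w v = inner u_star v - lam_star * inner (\<gamma> u_star) (\<gamma> v)"
    and "\<gamma> u_star \<noteq> 0"
  shows "\<exists>lam. steklov_eigenvalue \<gamma> lam \<and>
           \<bar>(lam - lam_star) / lam\<bar> \<le> norm (\<gamma> w) / norm (\<gamma> u_star)"
proof -
  have bl: "bounded_linear \<gamma>" and cpt: "\<forall>B. bounded B \<longrightarrow> compact (closure (\<gamma> ` B))"
    using assms(1) unfolding compact_operator_def by auto
  interpret g: bounded_linear \<gamma> by fact
  define Sl where "Sl L = {v. \<forall>x\<in>set L. inner x v = 0}" for L :: "'v list"
  have Slcl: "closed (Sl L)" for L
  proof -
    have "Sl L = (\<Inter>x\<in>set L. {v. inner x v = 0})" by (auto simp: Sl_def)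
    thus ?thesis by (simp add: closed_INT closed_hyperplane)
  qed
  have Sladd: "\<forall>x\<in>Sl L. \<forall>y\<in>Sl L. x + y \<in> Sl L" for L by (auto simp: Sl_def inner_add_right)
  have Slsc: "\<forall>x\<in>Sl L. \<forall>c. c *\<^sub>R x \<in> Sl L" for L by (auto simp: Sl_def)
  have "\<forall>L. \<exists>u. u \<in> Sl L \<and> (norm u = 1 \<or> u = 0) \<and>
          (\<forall>v\<in>Sl L. (norm (\<gamma> v))\<^sup>2 \<le> (norm (\<gamma> u))\<^sup>2 * (norm v)\<^sup>2)"
  proof
    fix L
    show "\<exists>u. u \<in> Sl L \<and> (norm u = 1 \<or> u = 0) \<and>
          (\<forall>v\<in>Sl L. (norm (\<gamma> v))\<^sup>2 \<le> (norm (\<gamma> u))\<^sup>2 * (norm v)\<^sup>2)"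
    proof (cases "\<exists>v\<in>Sl L. \<gamma> v \<noteq> 0")
      case True
      from maximizer[OF bl cpt Slcl Sladd Slsc True] show ?thesis by blast
    next
      case False
      hence "\<forall>v\<in>Sl L. (norm (\<gamma> v))\<^sup>2 \<le> (norm (\<gamma> 0))\<^sup>2 * (norm v)\<^sup>2" by simp
      moreover have "(0::'v) \<in> Sl L" by (simp add: Sl_def)
      ultimately show ?thesis by blast
    qed
  qed
  then obtain nxt where nxt: "\<And>L. nxt L \<in> Sl L" "\<And>L. norm (nxt L) = 1 \<or> nxt L = 0"
    "\<And>L v. v \<in> Sl L \<Longrightarrow> (norm (\<gamma> v))\<^sup>2 \<le> (norm (\<gamma> (nxt L)))\<^sup>2 * (norm v)\<^sup>2" by metis
  define es where "es = rec_nat [] (\<lambda>n L. L @ [nxt L])"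
  define e where "e k = nxt (es k)" for k
  have es: "es k = map e [0..<k]" for k by (induction k) (simp_all add: es_def e_def)
  define S where "S k = {v. \<forall>j<k. inner (e j) v = 0}" for k
  have SSl: "Sl (es k) = S k" for k by (auto simp: Sl_def S_def es)
  define \<mu> where "\<mu> k = (norm (\<gamma> (e k)))\<^sup>2" for k
  have \<mu>nn: "\<mu> k \<ge> 0" for k by (simp add: \<mu>_def)
  have eS: "e k \<in> S k" for k using nxt(1)[of "es k"] SSl by (simp add: e_def)
  have e1: "norm (e k) = 1 \<or> e k = 0" for k by (simp add: e_def nxt(2))
  have ebd: "\<forall>v\<in>S k. (norm (\<gamma> v))\<^sup>2 \<le> \<mu> k * (norm v)\<^sup>2" for k
    using nxt(3)[of _ "es k"] SSl by (simp add: e_def \<mu>_def)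
  have Sadd: "\<forall>x\<in>S k. \<forall>y\<in>S k. x + y \<in> S k" for k by (auto simp: S_def inner_add_right)
  have Ssc: "\<forall>x\<in>S k. \<forall>c. c *\<^sub>R x \<in> S k" for k by (auto simp: S_def)
  have Smono: "S k' \<subseteq> S k" if "k \<le> k'" for k k' using that by (auto simp: S_def)
  have eig: "inner (\<gamma> (e k)) (\<gamma> v) = \<mu> k * inner (e k) v" if "v \<in> S k" for k v
  proof (rule EL[OF bl Sadd Ssc eS ebd _ that])
    show "(norm (\<gamma> (e k)))\<^sup>2 = \<mu> k * (norm (e k))\<^sup>2" using e1[of k] by (auto simp: \<mu>_def)
  qed
  have ee: "inner (e i) (e j) = 0" if "i \<noteq> j" for i j
  proof (cases "i < j")
    case True thus ?thesis using eS[of j] by (simp add: S_def)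
  next
    case False hence "j < i" using that by simp
    hence "inner (e j) (e i) = 0" using eS[of i] by (simp add: S_def)
    thus ?thesis by (simp add: inner_commute)
  qed
  have eself: "inner (e k) (e k) * c = c \<or> e k = 0" for k c
    using e1[of k] by (metis mult_1 power2_norm_eq_inner power_one)
  have gorth: "inner (\<gamma> (e i)) (\<gamma> (e j)) = 0" if "i \<noteq> j" for i j
  proof (cases "i < j")
    case True
    hence "e j \<in> S i" using eS[of j] Smono[of i j] by auto
    thus ?thesis using eig ee that by simp
  next
    case False hence "j < i" using that by simp
    hence "e i \<in> S j" using eS[of i] Smono[of j i] by auto
    thus ?thesis using eig ee that by (simp add: inner_commute)
  qed
  have small: "\<exists>k\<ge>N. \<mu> k < \<epsilon>" if "\<epsilon> > 0" for \<epsilon> N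
  proof -
    have nb: "norm (e k) \<le> 1" for k using e1[of k] by auto
    show ?thesis unfolding \<mu>_def by (rule small[OF cpt gorth nb that])
  qed
  have geig: "inner (\<gamma> (e k)) (\<gamma> v) = \<mu> k * inner (e k) v" for k v
  proof -
    define p where "p = v - (\<Sum>j<k. inner (e j) v *\<^sub>R e j)"
    have "p \<in> S k" unfolding S_def
    proof (intro CollectI allI impI)
      fix i assume i: "i < k"
      have "(\<Sum>j<k. inner (e j) v * inner (e i) (e j)) = inner (e i) v * inner (e i) (e i)"
        using i by (subst sum.remove[of _ i]) (auto simp: ee inner_commute intro!: sum.neutral)
      also have "\<dots> = inner (e i) v" using eself[of i "inner (e i) v"] by (auto simp: mult.commute)
      finally show "inner (e i) p = 0"
        by (simp add: p_def inner_diff_right inner_sum_right)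
    qed
    have "\<gamma> v = \<gamma> p + (\<Sum>j<k. inner (e j) v *\<^sub>R \<gamma> (e j))"
      by (simp add: p_def g.diff g.sum g.scaleR)
    hence 1: "inner (\<gamma> (e k)) (\<gamma> v) = inner (\<gamma> (e k)) (\<gamma> p)"
      by (simp add: inner_add_right inner_sum_right gorth)
    have 2: "inner (e k) v = inner (e k) p"
      by (simp add: p_def inner_diff_right inner_sum_right ee)
    show ?thesis using 1 2 eig[OF \<open>p \<in> S k\<close>] by simp
  qed
  define F where "F k x = x - inner x (e k) *\<^sub>R e k" for k x
  define X where "X x0 k = rec_nat x0 (\<lambda>k x. F k x) k" for x0 k
  have X0: "X x0 0 = x0" for x0 by (simp add: X_def)
  have XS: "X x0 (Suc k) = F k (X x0 k)" for x0 k by (simp add: X_def)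
  have XinS: "X x0 k \<in> S k" for x0 k
  proof (induction k)
    case 0 show ?case by (simp add: X0 S_def)
  next
    case (Suc k)
    show ?case unfolding S_def
    proof (intro CollectI allI impI)
      fix j assume j: "j < Suc k"
      show "inner (e j) (X x0 (Suc k)) = 0"
      proof (cases "j = k")
        case True
        have "inner (e k) (X x0 k) - inner (X x0 k) (e k) * inner (e k) (e k) = 0"
          using eself[of k "inner (X x0 k) (e k)"] by (auto simp: inner_commute mult.commute)
        thus ?thesis using True by (simp add: XS F_def inner_diff_right)
      next
        case False
        hence "j < k" using j by simp
        thus ?thesis using Suc ee[of j k] by (simp add: XS F_def inner_diff_right S_def)
      qed
    qed
  qed
  have Fnorm: "(norm (F k x))\<^sup>2 \<le> (norm x)\<^sup>2" for k x
  proof -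
    define d where "d = inner x (e k)"
    have "(norm (F k x))\<^sup>2 = (norm x)\<^sup>2 - 2*d*d + d*d*inner (e k) (e k)"
    proof -
      have h2: "inner (e k) x = d" by (simp add: d_def inner_commute)
      show ?thesis unfolding d_def[symmetric] power2_norm_eq_inner F_def
        by (simp add: inner_diff_left inner_diff_right h2 d_def[symmetric]) (simp add: algebra_simps)
    qed
    moreover have "d*d*inner (e k) (e k) \<le> d*d"
      using eself[of k "d*d"] by (auto simp: mult.commute)
    moreover have "d*d \<ge> 0" by simp
    ultimately show ?thesis by linarith
  qed
  have Xnorm: "norm (X x0 k) \<le> norm x0" for x0 k
  proof (induction k)
    case 0 show ?case by (simp add: X0)
  next
    case (Suc k)
    have "norm (X x0 (Suc k)) \<le> norm (X x0 k)"
      using Fnorm[of k "X x0 k"] unfolding XS by (rule power2_le_imp_le) simp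
    thus ?case using Suc by simp
  qed
  have Xstep: "(norm (\<gamma> (X x0 k)))\<^sup>2 = (norm (\<gamma> (X x0 (Suc k))))\<^sup>2 + (inner (X x0 k) (e k))\<^sup>2 * \<mu> k" for x0 k
  proof -
    define d where "d = inner (X x0 k) (e k)"
    have gx: "\<gamma> (X x0 k) = \<gamma> (X x0 (Suc k)) + d *\<^sub>R \<gamma> (e k)"
      by (simp add: XS F_def d_def g.diff g.scaleR)
    have "X x0 (Suc k) \<in> S k" using XinS[of x0 "Suc k"] Smono[of k "Suc k"] by auto
    hence "inner (\<gamma> (e k)) (\<gamma> (X x0 (Suc k))) = \<mu> k * inner (e k) (X x0 (Suc k))" by (rule eig)
    moreover have "inner (e k) (X x0 (Suc k)) = 0" using XinS[of x0 "Suc k"] by (simp add: S_def)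
    ultimately have o: "inner (\<gamma> (X x0 (Suc k))) (\<gamma> (e k)) = 0" by (simp add: inner_commute)
    have gg: "inner (\<gamma> (e k)) (\<gamma> (e k)) = \<mu> k" by (simp add: \<mu>_def power2_norm_eq_inner)
    show ?thesis unfolding d_def[symmetric] gx power2_norm_eq_inner
      using o gg by (simp add: inner_add_left inner_add_right inner_commute power2_eq_square algebra_simps)
  qed
  have Xbd: "(norm (\<gamma> (X x0 k)))\<^sup>2 \<le> \<mu> k * (norm x0)\<^sup>2" for x0 k
  proof -
    have "(norm (\<gamma> (X x0 k)))\<^sup>2 \<le> \<mu> k * (norm (X x0 k))\<^sup>2" using ebd XinS by blast
    also have "\<dots> \<le> \<mu> k * (norm x0)\<^sup>2"
      using Xnorm[of x0 k] \<mu>nn by (intro mult_left_mono power_mono) auto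
    finally show ?thesis .
  qed
  have rel: "\<forall>v\<in>S k. inner (X w k) v = inner (X u_star k) v - lam_star * inner (\<gamma> (X u_star k)) (\<gamma> v)" for k
  proof (induction k)
    case 0 show ?case using assms(2) by (simp add: X0)
  next
    case (Suc k)
    show ?case
    proof
      fix v assume v: "v \<in> S (Suc k)"
      hence vk: "v \<in> S k" using Smono[of k "Suc k"] by auto
      have ev: "inner (e k) v = 0" using v by (simp add: S_def)
      have gev: "inner (\<gamma> (e k)) (\<gamma> v) = 0" using eig[OF vk] ev by simp
      show "inner (X w (Suc k)) v = inner (X u_star (Suc k)) v - lam_star * inner (\<gamma> (X u_star (Suc k))) (\<gamma> v)"
        using Suc vk ev gev by (simp add: XS F_def inner_diff_left g.diff g.scaleR)
    qed
  qed
  define d where "d k = inner (X u_star k) (e k)" for k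
  have fk: "inner (X w k) (e k) = d k * (1 - lam_star * \<mu> k)" for k
  proof -
    have "inner (X w k) (e k) = d k - lam_star * inner (\<gamma> (X u_star k)) (\<gamma> (e k))"
      using rel[of k] eS[of k] by (simp add: d_def)
    moreover have "inner (\<gamma> (e k)) (\<gamma> (X u_star k)) = \<mu> k * d k"
      using eig[OF XinS[of u_star k]] by (simp add: d_def inner_commute)
    ultimately show ?thesis by (simp add: inner_commute algebra_simps)
  qed
  define r where "r = norm (\<gamma> w) / norm (\<gamma> u_star)"
  define N0 where "N0 = (norm (\<gamma> u_star))\<^sup>2"
  have N0pos: "N0 > 0" using assms(3) by (simp add: N0_def)
  have rnn: "r \<ge> 0" by (simp add: r_def)
  have wN: "(norm (\<gamma> w))\<^sup>2 = r\<^sup>2 * N0" using assms(3) by (simp add: r_def N0_def power_divide)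
  show ?thesis
  proof (rule ccontr)
    assume neg: "\<not> ?thesis"
    have H: "(1 - lam_star * \<mu> k)\<^sup>2 > r\<^sup>2" if mp: "\<mu> k > 0" for k
    proof -
      have "e k \<noteq> 0" using mp by (auto simp: \<mu>_def)
      moreover have "\<forall>v. inner (e k) v = (1 / \<mu> k) * inner (\<gamma> (e k)) (\<gamma> v)"
        using geig mp by simp
      ultimately have "steklov_eigenvalue \<gamma> (1 / \<mu> k)" unfolding steklov_eigenvalue_def by blast
      hence "\<not> \<bar>(1 / \<mu> k - lam_star) / (1 / \<mu> k)\<bar> \<le> r" using neg r_def by blast
      moreover have "(1 / \<mu> k - lam_star) / (1 / \<mu> k) = 1 - lam_star * \<mu> k"
        using mp by (simp add: field_simps)
      ultimately have "r < \<bar>1 - lam_star * \<mu> k\<bar>" by simp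
      hence "r\<^sup>2 < \<bar>1 - lam_star * \<mu> k\<bar>\<^sup>2" using rnn by (intro power_strict_mono) auto
      thus ?thesis by simp
    qed
    define G where "G k = \<mu> k * (d k)\<^sup>2 * ((1 - lam_star * \<mu> k)\<^sup>2 - r\<^sup>2)" for k
    have Gnn: "G k \<ge> 0" for k
    proof (cases "\<mu> k > 0")
      case True thus ?thesis using H[OF True] by (simp add: G_def)
    next
      case False hence "\<mu> k = 0" using \<mu>nn[of k] by simp
      thus ?thesis by (simp add: G_def)
    qed
    define \<Phi> where "\<Phi> k = (norm (\<gamma> (X w k)))\<^sup>2 - r\<^sup>2 * (norm (\<gamma> (X u_star k)))\<^sup>2" for k
    have \<Phi>0: "\<Phi> 0 = 0" using wN by (simp add: \<Phi>_def X0 N0_def)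
    have sq: "(d k - lam_star*(\<mu> k * d k))\<^sup>2 = (d k)\<^sup>2*(1 - lam_star*\<mu> k)\<^sup>2" for k
      by (simp add: power2_eq_square algebra_simps)
    have \<Phi>step: "\<Phi> k = \<Phi> (Suc k) + G k" for k
      unfolding \<Phi>_def G_def Xstep[of w k] Xstep[of u_star k] fk d_def[symmetric]
      using sq[of k] by (simp add: power_mult_distrib algebra_simps)
    have \<Phi>sum: "\<Phi> k = - (\<Sum>j<k. G j)" for k
    proof (induction k)
      case 0 show ?case using \<Phi>0 by simp
    next
      case (Suc k) thus ?case using \<Phi>step[of k] by simp
    qed
    have Tsum: "(norm (\<gamma> (X u_star k)))\<^sup>2 = N0 - (\<Sum>j<k. \<mu> j * (d j)\<^sup>2)" for k
    proof (induction k)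
      case 0 show ?case by (simp add: X0 N0_def)
    next
      case (Suc k) thus ?case using Xstep[of u_star k] by (simp add: d_def mult.commute)
    qed
    have sumG: "(\<Sum>j<k. G j) \<le> r\<^sup>2 * (\<mu> k * (norm u_star)\<^sup>2)" for k
    proof -
      have "(\<Sum>j<k. G j) = r\<^sup>2 * (norm (\<gamma> (X u_star k)))\<^sup>2 - (norm (\<gamma> (X w k)))\<^sup>2"
        using \<Phi>sum[of k] by (simp add: \<Phi>_def)
      also have "\<dots> \<le> r\<^sup>2 * (norm (\<gamma> (X u_star k)))\<^sup>2" by simp
      also have "\<dots> \<le> r\<^sup>2 * (\<mu> k * (norm u_star)\<^sup>2)"
        using Xbd[of u_star k] by (intro mult_left_mono) auto
      finally show ?thesis .
    qed
    show False
    proof (cases "\<exists>j. \<mu> j * (d j)\<^sup>2 \<noteq> 0")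
      case True
      then obtain j0 where j0: "\<mu> j0 * (d j0)\<^sup>2 \<noteq> 0" by blast
      hence mp: "\<mu> j0 > 0" and dp: "(d j0)\<^sup>2 > 0" using \<mu>nn[of j0] by (auto simp: less_le)
      have Gp: "G j0 > 0" using H[OF mp] mp dp by (simp add: G_def)
      define A where "A = r\<^sup>2 * (norm u_star)\<^sup>2 + 1"
      have Ap: "A > 0" by (simp add: A_def add_nonneg_pos)
      obtain k where k: "k \<ge> Suc j0" "\<mu> k < G j0 / A" using small[of "G j0 / A" "Suc j0"] Gp Ap by auto
      have "G j0 \<le> (\<Sum>j<k. G j)"
        using k(1) Gnn by (intro member_le_sum) auto
      also have "\<dots> \<le> r\<^sup>2 * (\<mu> k * (norm u_star)\<^sup>2)" by (rule sumG)
      also have "\<dots> \<le> \<mu> k * A" using \<mu>nn[of k] by (simp add: A_def algebra_simps)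
      also have "\<dots> < G j0" using k(2) Ap by (simp add: pos_less_divide_eq)
      finally show False by simp
    next
      case False
      hence z: "\<And>j. \<mu> j * (d j)\<^sup>2 = 0" by simp
      have NN: "(norm (\<gamma> (X u_star k)))\<^sup>2 = N0" for k using Tsum z by simp
      define A where "A = (norm u_star)\<^sup>2 + 1"
      have Ap: "A > 0" by (simp add: A_def add_nonneg_pos)
      obtain k where k: "\<mu> k < N0 / A" using small[of "N0 / A" 0] N0pos Ap by auto
      have "N0 \<le> \<mu> k * (norm u_star)\<^sup>2" using Xbd[of u_star k] NN[of k] by simp
      also have "\<dots> \<le> \<mu> k * A" using \<mu>nn[of k] by (simp add: A_def algebra_simps)
      also have "\<dots> < N0" using k Ap by (simp add: pos_less_divide_eq)
      finally show False by simp
    qed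
  qed
qed

end
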